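(* A strongly semiconnected digraph is doubly stochasticable if and only if all of its strongly connected components are doubly stochasticable.
   Context: A digraph $G=(V,E)$, $V=\{v_1,\dots,v_n\}$, $E\subseteq V\times V$. $G$ is strongly semiconnected if, for all $v,w\in V$, a directed path from $v$ to $w$ implies one from $w$ to $v$. The strongly connected components are the maximal strongly connected subdigraphs. An adjacency matrix assigned to $G$ is $A\in\mathbb{R}^{n\times n}_{\geq0}$ with $a_{ij}>0$ iff $(v_i,v_j)\in E$; $G$ is doubly stochasticable if it admits an adjacency matrix whose row and column sums all equal $1$. *)

theory Defs
  imports Main "HOL.Real"
begin

definition digraph :: "'a set \<Rightarrow> ('a \<times> 'a) set \<Rightarrow> bool" where
  "digraph V E \<longleftrightarrow> finite V \<and> E \<subseteq> V \<times> V"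

definition strongly_semiconnected :: "'a set \<Rightarrow> ('a \<times> 'a) set \<Rightarrow> bool" where
  "strongly_semiconnected V E \<longleftrightarrow>
     (\<forall>v\<in>V. \<forall>w\<in>V. (v, w) \<in> E\<^sup>* \<longrightarrow> (w, v) \<in> E\<^sup>*)"

definition subdigraph :: "'a set \<Rightarrow> ('a \<times> 'a) set \<Rightarrow> 'a set \<Rightarrow> ('a \<times> 'a) set \<Rightarrow> bool" where
  "subdigraph V' E' V E \<longleftrightarrow> V' \<subseteq> V \<and> E' \<subseteq> E \<and> E' \<subseteq> V' \<times> V'"

definition strongly_connected :: "'a set \<Rightarrow> ('a \<times> 'a) set \<Rightarrow> bool" where
  "strongly_connected V E \<longleftrightarrow> V \<noteq> {} \<and> (\<forall>v\<in>V. \<forall>w\<in>V. (v, w) \<in> E\<^sup>*)"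

definition scc :: "'a set \<Rightarrow> ('a \<times> 'a) set \<Rightarrow> 'a set \<Rightarrow> ('a \<times> 'a) set \<Rightarrow> bool" where
  "scc V E V' E' \<longleftrightarrow> subdigraph V' E' V E \<and> strongly_connected V' E' \<and>
     (\<forall>V'' E''. subdigraph V'' E'' V E \<and> strongly_connected V'' E'' \<and>
        V' \<subseteq> V'' \<and> E' \<subseteq> E'' \<longrightarrow> V'' = V' \<and> E'' = E')"

definition adjacency_matrix :: "'a set \<Rightarrow> ('a \<times> 'a) set \<Rightarrow> ('a \<Rightarrow> 'a \<Rightarrow> real) \<Rightarrow> bool" where
  "adjacency_matrix V E A \<longleftrightarrow>
     (\<forall>v\<in>V. \<forall>w\<in>V. A v w \<ge> 0 \<and> (A v w > 0 \<longleftrightarrow> (v, w) \<in> E))"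

definition doubly_stochasticable :: "'a set \<Rightarrow> ('a \<times> 'a) set \<Rightarrow> bool" where
  "doubly_stochasticable V E \<longleftrightarrow>
     (\<exists>A. adjacency_matrix V E A \<and>
          (\<forall>v\<in>V. (\<Sum>w\<in>V. A v w) = 1) \<and>
          (\<forall>w\<in>V. (\<Sum>v\<in>V. A v w) = 1))"

end

theory Submission
  imports Defs
begin

lemma reach_in_V:
  assumes "E \<subseteq> V \<times> V" "v \<in> V" "(v,u) \<in> E\<^sup>*" shows "u \<in> V"
  using assms(3,2) by induction (use assms(1) in auto)

lemma path_within:
  assumes "x \<in> {u. (v,u) \<in> E\<^sup>*}" "(x,y) \<in> E\<^sup>*"
  shows "(x,y) \<in> (E \<inter> ({u. (v,u) \<in> E\<^sup>*} \<times> {u. (v,u) \<in> E\<^sup>*}))\<^sup>*"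
  using assms(2)
proof induction
  case base then show ?case by simp
next
  case (step y z)
  have "(v,x) \<in> E\<^sup>*" using assms(1) by simp
  then have vy: "(v,y) \<in> E\<^sup>*" using step(1) by (rule rtrancl_trans)
  then have vz: "(v,z) \<in> E\<^sup>*" using step(2) by (rule rtrancl_into_rtrancl)
  have "(y,z) \<in> E \<inter> ({u. (v,u) \<in> E\<^sup>*} \<times> {u. (v,u) \<in> E\<^sup>*})"
    using vy vz step(2) by simp
  with step(3) show ?case by (rule rtrancl_into_rtrancl)
qed

lemma class_eq:
  assumes "E \<subseteq> V \<times> V" "strongly_semiconnected V E" "v \<in> V" "(v,u) \<in> E\<^sup>*"
  shows "{x. (u,x) \<in> E\<^sup>*} = {x. (v,x) \<in> E\<^sup>*}"
proof -
  have "u \<in> V" using reach_in_V[OF assms(1,3,4)] .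
  then have uv: "(u,v) \<in> E\<^sup>*" using assms(2,3,4) unfolding strongly_semiconnected_def by blast
  show ?thesis
  proof (intro equalityI subsetI)
    fix x assume "x \<in> {x. (u,x) \<in> E\<^sup>*}"
    then have "(u,x) \<in> E\<^sup>*" by simp
    with assms(4) have "(v,x) \<in> E\<^sup>*" by (rule rtrancl_trans)
    then show "x \<in> {x. (v,x) \<in> E\<^sup>*}" by simp
  next
    fix x assume "x \<in> {x. (v,x) \<in> E\<^sup>*}"
    then have "(v,x) \<in> E\<^sup>*" by simp
    with uv have "(u,x) \<in> E\<^sup>*" by (rule rtrancl_trans)
    then show "x \<in> {x. (u,x) \<in> E\<^sup>*}" by simp
  qed
qed

lemma class_scc:
  assumes "E \<subseteq> V \<times> V" "strongly_semiconnected V E" "v \<in> V"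
  defines "C \<equiv> {x. (v,x) \<in> E\<^sup>*}"
  shows "scc V E C (E \<inter> C \<times> C)"
proof -
  have CV: "C \<subseteq> V"
  proof
    fix x assume "x \<in> C"
    then have "(v,x) \<in> E\<^sup>*" unfolding C_def by simp
    then show "x \<in> V" using reach_in_V[OF assms(1,3)] by blast
  qed
  have vC: "v \<in> C" unfolding C_def by simp
  have sc: "strongly_connected C (E \<inter> C \<times> C)"
    unfolding strongly_connected_def
  proof (intro conjI ballI)
    show "C \<noteq> {}" using vC by blast
  next
    fix a b assume a: "a \<in> C" and b: "b \<in> C"
    have "a \<in> V" using a CV by blast
    then have av: "(a,v) \<in> E\<^sup>*" using a assms(2,3) unfolding C_def strongly_semiconnected_def by blast
    have "(v,b) \<in> E\<^sup>*" using b unfolding C_def by simp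
    with av have "(a,b) \<in> E\<^sup>*" by (rule rtrancl_trans)
    from path_within[of a v E b, OF _ this] a show "(a,b) \<in> (E \<inter> C \<times> C)\<^sup>*"
      unfolding C_def by simp
  qed
  show ?thesis unfolding scc_def
  proof (intro conjI allI impI)
    show "subdigraph C (E \<inter> C \<times> C) V E" using CV unfolding subdigraph_def by blast
    show "strongly_connected C (E \<inter> C \<times> C)" by (rule sc)
  next
    fix V'' E'' assume h: "subdigraph V'' E'' V E \<and> strongly_connected V'' E'' \<and> C \<subseteq> V'' \<and> E \<inter> C \<times> C \<subseteq> E''"
    have E''E: "E'' \<subseteq> E" and E''V: "E'' \<subseteq> V'' \<times> V''" using h unfolding subdigraph_def by blast+
    have V''C: "V'' \<subseteq> C"
    proof
      fix x assume x: "x \<in> V''"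
      have "v \<in> V''" using h vC by blast
      then have "(v,x) \<in> E''\<^sup>*" using h x unfolding strongly_connected_def by blast
      then have "(v,x) \<in> E\<^sup>*" using rtrancl_mono[OF E''E] by blast
      then show "x \<in> C" unfolding C_def by simp
    qed
    then show "V'' = C" using h by blast
    show "E'' = E \<inter> C \<times> C"
    proof
      show "E'' \<subseteq> E \<inter> C \<times> C" using E''E E''V V''C by blast
      show "E \<inter> C \<times> C \<subseteq> E''" using h by blast
    qed
  qed
qed

lemma scc_is_class:
  assumes "E \<subseteq> V \<times> V" "strongly_semiconnected V E" "scc V E V' E'"
  shows "\<exists>v\<in>V. V' = {x. (v,x) \<in> E\<^sup>*} \<and> E' = E \<inter> V' \<times> V'"
proof -
  have sub: "subdigraph V' E' V E" and scV: "strongly_connected V' E'"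
    and mx: "\<And>V'' E''. subdigraph V'' E'' V E \<Longrightarrow> strongly_connected V'' E'' \<Longrightarrow>
        V' \<subseteq> V'' \<Longrightarrow> E' \<subseteq> E'' \<Longrightarrow> V'' = V' \<and> E'' = E'"
    using assms(3) unfolding scc_def by blast+
  from scV obtain v where v: "v \<in> V'" unfolding strongly_connected_def by blast
  have vV: "v \<in> V" using sub v unfolding subdigraph_def by blast
  define C where "C = {x. (v,x) \<in> E\<^sup>*}"
  have s: "scc V E C (E \<inter> C \<times> C)" using class_scc[OF assms(1,2) vV] unfolding C_def .
  have sC: "subdigraph C (E \<inter> C \<times> C) V E" "strongly_connected C (E \<inter> C \<times> C)"
    using s unfolding scc_def by blast+
  have E'E: "E' \<subseteq> E" "E' \<subseteq> V' \<times> V'" using sub unfolding subdigraph_def by blast+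
  have V'C: "V' \<subseteq> C"
  proof
    fix x assume "x \<in> V'"
    then have "(v,x) \<in> E'\<^sup>*" using scV v unfolding strongly_connected_def by blast
    then have "(v,x) \<in> E\<^sup>*" using rtrancl_mono[OF E'E(1)] by blast
    then show "x \<in> C" unfolding C_def by simp
  qed
  moreover have "E' \<subseteq> E \<inter> C \<times> C" using E'E V'C by blast
  ultimately have "C = V' \<and> E \<inter> C \<times> C = E'" using mx[OF sC] by blast
  then show ?thesis using vV C_def by blast
qed

theorem lemma3p1:
  fixes V :: "'a set" and E :: "('a \<times> 'a) set"
  assumes "digraph V E"
    and "strongly_semiconnected V E"
  shows "doubly_stochasticable V E \<longleftrightarrow>
           (\<forall>V' E'. scc V E V' E' \<longrightarrow> doubly_stochasticable V' E')"
proof -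
  have EV: "E \<subseteq> V \<times> V" and fin: "finite V" using assms(1) unfolding digraph_def by auto
  note ss = assms(2)
  define C where "C v = {x. (v,x) \<in> E\<^sup>*}" for v
  have CV: "C v \<subseteq> V" if "v \<in> V" for v using reach_in_V[OF EV that] unfolding C_def by blast
  have Cself: "v \<in> C v" for v unfolding C_def by auto
  have Cedge: "w \<in> C v" if "(v,w) \<in> E" for v w using that unfolding C_def by auto
  have Cback: "v \<in> C w" if "(v,w) \<in> E" "v \<in> V" for v w
  proof -
    have "w \<in> V" using that EV by auto
    then show ?thesis using that ss unfolding C_def strongly_semiconnected_def by blast
  qed
  have Ceq: "C u = C v" if "v \<in> V" "u \<in> C v" for u v
  proof -
    have "(v,u) \<in> E\<^sup>*" using that(2) by (simp add: C_def)
    from class_eq[OF EV ss that(1) this] show ?thesis by (simp only: C_def)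
  qed
  show ?thesis
  proof
    assume "doubly_stochasticable V E"
    then obtain A where adj: "adjacency_matrix V E A" and rs: "\<forall>v\<in>V. (\<Sum>w\<in>V. A v w) = 1"
      and cs: "\<forall>w\<in>V. (\<Sum>v\<in>V. A v w) = 1" unfolding doubly_stochasticable_def by blast
    show "\<forall>V' E'. scc V E V' E' \<longrightarrow> doubly_stochasticable V' E'"
    proof (intro allI impI)
      fix V' E' assume "scc V E V' E'"
      then obtain x where xV: "x \<in> V" and V': "V' = C x" and E': "E' = E \<inter> V' \<times> V'"
        using scc_is_class[OF EV ss] unfolding C_def by blast
      have V'V: "V' \<subseteq> V" using CV xV V' by auto
      have adj': "adjacency_matrix V' E' A" using adj V'V unfolding adjacency_matrix_def E' by auto
      have z: "A v w = 0" if "v \<in> V" "w \<in> V" "(v,w) \<notin> E" for v w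
        using adj that unfolding adjacency_matrix_def by force
      have "(\<Sum>w\<in>V'. A v w) = 1" if v: "v \<in> V'" for v
      proof -
        have vV: "v \<in> V" using v V'V by auto
        have CvV': "C v = V'" using Ceq[OF xV] v V' by auto
        have "(\<Sum>w\<in>V. A v w) = (\<Sum>w\<in>V'. A v w)"
        proof (rule sum.mono_neutral_right[OF fin V'V], rule ballI)
          fix w assume "w \<in> V - V'"
          then have "(v,w) \<notin> E" using Cedge CvV' by blast
          then show "A v w = 0" using z vV \<open>w \<in> V - V'\<close> by auto
        qed
        then show ?thesis using rs vV by simp
      qed
      moreover have "(\<Sum>v\<in>V'. A v w) = 1" if w: "w \<in> V'" for w
      proof -
        have wV: "w \<in> V" using w V'V by auto
        have CwV': "C w = V'" using Ceq[OF xV] w V' by auto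
        have "(\<Sum>v\<in>V. A v w) = (\<Sum>v\<in>V'. A v w)"
        proof (rule sum.mono_neutral_right[OF fin V'V], rule ballI)
          fix v assume "v \<in> V - V'"
          then have "(v,w) \<notin> E" using Cback CwV' by blast
          then show "A v w = 0" using z wV \<open>v \<in> V - V'\<close> by auto
        qed
        then show ?thesis using cs wV by simp
      qed
      ultimately show "doubly_stochasticable V' E'"
        unfolding doubly_stochasticable_def using adj' by blast
    qed
  next
    assume H: "\<forall>V' E'. scc V E V' E' \<longrightarrow> doubly_stochasticable V' E'"
    define P where "P S A \<longleftrightarrow> adjacency_matrix S (E \<inter> S \<times> S) A \<and>
          (\<forall>v\<in>S. (\<Sum>w\<in>S. A v w) = 1) \<and> (\<forall>w\<in>S. (\<Sum>v\<in>S. A v w) = 1)" for S A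
    define M where "M S = (SOME A. P S A)" for S
    have PM: "P (C v) (M (C v))" if "v \<in> V" for v
    proof -
      have sc: "scc V E (C v) (E \<inter> C v \<times> C v)"
        using class_scc[OF EV ss that] by (simp only: C_def)
      have "doubly_stochasticable (C v) (E \<inter> C v \<times> C v)"
        using H sc by blast
      then have "\<exists>A. P (C v) A" by (simp only: P_def doubly_stochasticable_def)
      then show ?thesis unfolding M_def by (rule someI_ex)
    qed
    define A where "A v w = (if (v,w) \<in> E then M (C v) v w else 0)" for v w
    have Mz: "M (C v) a b = 0" if "v \<in> V" "a \<in> C v" "b \<in> C v" "(a,b) \<notin> E" for v a b
    proof -
      have adjM: "adjacency_matrix (C v) (E \<inter> C v \<times> C v) (M (C v))"
        using PM[OF that(1)] unfolding P_def by blast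
      have "M (C v) a b \<ge> 0" "\<not> M (C v) a b > 0"
        using adjM that(2-4) unfolding adjacency_matrix_def by blast+
      then show ?thesis by linarith
    qed
    have row: "A v w = (if w \<in> C v then M (C v) v w else 0)" if "v \<in> V" "w \<in> V" for v w
    proof (cases "(v,w) \<in> E")
      case True
      then have "w \<in> C v" by (rule Cedge)
      then show ?thesis unfolding A_def using True by simp
    next
      case False
      then show ?thesis unfolding A_def using Mz[OF that(1) Cself, of w] by simp
    qed
    have col: "A v w = (if v \<in> C w then M (C w) v w else 0)" if "v \<in> V" "w \<in> V" for v w
    proof (cases "(v,w) \<in> E")
      case True
      have 1: "v \<in> C w" using Cback[OF True that(1)] .
      have 2: "C v = C w" using Ceq[OF that(2) 1] .
      show ?thesis unfolding A_def using True 1 2 by simp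
    next
      case False
      show ?thesis
      proof (cases "v \<in> C w")
        case True
        then show ?thesis unfolding A_def using False Mz[OF that(2) True Cself] by simp
      qed (simp add: A_def False)
    qed
    have adjM: "adjacency_matrix (C v) (E \<inter> C v \<times> C v) (M (C v))" if "v \<in> V" for v
      using PM[OF that] unfolding P_def by blast
    have AM: "adjacency_matrix V E A" unfolding adjacency_matrix_def
    proof (intro ballI)
      fix v w assume v: "v \<in> V" and w: "w \<in> V"
      show "A v w \<ge> 0 \<and> (A v w > 0) = ((v,w) \<in> E)"
      proof (cases "(v,w) \<in> E")
        case True
        have "w \<in> C v" using Cedge[OF True] .
        then have "M (C v) v w \<ge> 0 \<and> (M (C v) v w > 0) = ((v,w) \<in> E \<inter> C v \<times> C v)"
          using adjM[OF v] Cself[of v] unfolding adjacency_matrix_def by blast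
        then show ?thesis unfolding A_def using True \<open>w \<in> C v\<close> Cself[of v] by simp
      next
        case False
        then show ?thesis unfolding A_def by simp
      qed
    qed
    have RS: "(\<Sum>w\<in>V. A v w) = 1" if v: "v \<in> V" for v
    proof -
      have "(\<Sum>w\<in>V. A v w) = (\<Sum>w\<in>V. if w \<in> C v then M (C v) v w else 0)"
        using row v by (intro sum.cong) auto
      also have "\<dots> = (\<Sum>w\<in>V \<inter> C v. M (C v) v w)"
        using fin by (rule sum.inter_restrict[symmetric])
      also have "V \<inter> C v = C v" using CV[OF v] by blast
      also have "(\<Sum>w\<in>C v. M (C v) v w) = 1" using PM[OF v] Cself unfolding P_def by blast
      finally show ?thesis .
    qed
    have CS: "(\<Sum>v\<in>V. A v w) = 1" if w: "w \<in> V" for w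
    proof -
      have "(\<Sum>v\<in>V. A v w) = (\<Sum>v\<in>V. if v \<in> C w then M (C w) v w else 0)"
        using col w by (intro sum.cong) auto
      also have "\<dots> = (\<Sum>v\<in>V \<inter> C w. M (C w) v w)"
        using fin by (rule sum.inter_restrict[symmetric])
      also have "V \<inter> C w = C w" using CV[OF w] by blast
      also have "(\<Sum>v\<in>C w. M (C w) v w) = 1" using PM[OF w] Cself unfolding P_def by blast
      finally show ?thesis .
    qed
    show "doubly_stochasticable V E" unfolding doubly_stochasticable_def
      using AM RS CS by blast
  qed
qed

end
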